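(* Let $\beta>0$ and $M\ge1$. Every solution $\mathbf{p}\in\mathbb{R}^M$ of the system $$\mathbf{p}=\big\langle \mathbf{s}\,\tanh(\beta\,\mathbf{s}\cdot\mathbf{p})\big\rangle_{\mathbf{s}}$$ has all components equal: $p^\mu=p^\nu$ for all $\mu,\nu\in\{1,\dots,M\}$.
   Context: $m_0(\beta):=\lim_{h\to0^+}m_0(\beta,h)$, where $m_0(\beta,h)$ is the unique solution of $m=\tanh(\beta m+h)$ for $h>0$; equivalently $m_0(\beta)$ is the largest nonnegative solution of $m=\tanh(\beta m)$ (so $m_0(\beta)=0$ for $\beta\le1$ and $m_0(\beta)>0$ for $\beta>1$). $\langle\cdot\rangle_{\mathbf{s}}$ denotes expectation over $\mathbf{s}\in\{-1,1\}^M$ with i.i.d. entries of mean $m_0(\beta)$, i.e. weight $e^{\beta m_0\sum_\mu s_\mu}/(2\cosh(\beta m_0))^M$. *)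

theory Defs
  imports Complex_Main "HOL-Library.FuncSet"
begin

definition m0 :: "real \<Rightarrow> real" where
  "m0 \<beta> = (GREATEST m. 0 \<le> m \<and> m = tanh (\<beta> * m))"

text \<open>Spin configurations s in {-1,1}^M, indexed by 0..M-1 (extensional).\<close>
definition spins :: "nat \<Rightarrow> (nat \<Rightarrow> real) set" where
  "spins M = PiE {..<M} (\<lambda>_. {-1, 1})"

definition dotM :: "nat \<Rightarrow> (nat \<Rightarrow> real) \<Rightarrow> (nat \<Rightarrow> real) \<Rightarrow> real" where
  "dotM M s p = (\<Sum>\<mu><M. s \<mu> * p \<mu>)"

text \<open>Probability weight of s: i.i.d. entries with mean m0(beta).\<close>
definition spin_weight :: "real \<Rightarrow> nat \<Rightarrow> (nat \<Rightarrow> real) \<Rightarrow> real" where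
  "spin_weight \<beta> M s =
     exp (\<beta> * m0 \<beta> * (\<Sum>\<mu><M. s \<mu>)) / (2 * cosh (\<beta> * m0 \<beta>)) ^ M"

definition spin_avg :: "real \<Rightarrow> nat \<Rightarrow> ((nat \<Rightarrow> real) \<Rightarrow> real) \<Rightarrow> real" where
  "spin_avg \<beta> M f = (\<Sum>s\<in>spins M. spin_weight \<beta> M s * f s)"

end

theory Submission imports Defs "HOL-Analysis.Analysis" begin

lemma m0_props:
  fixes \<beta> :: real assumes b: "\<beta> > 0"
  shows "m0 \<beta> = tanh (\<beta> * m0 \<beta>)" "0 \<le> m0 \<beta>" "\<beta> * (1 - (m0 \<beta>)^2) \<le> 1"
proof -
  define S where "S = {m::real. 0 \<le> m \<and> m = tanh (\<beta> * m)}"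
  have S_eq: "S = {m. 0 \<le> m} \<inter> {m. m = tanh (\<beta> * m)}" unfolding S_def by auto
  have cl: "closed S" unfolding S_eq
    by (intro closed_Int closed_Collect_le closed_Collect_eq continuous_intros) auto
  have ne: "S \<noteq> {}" unfolding S_def by auto
  have bdd: "bdd_above S" unfolding S_def
    by (rule bdd_aboveI[of _ 1]) (metis (mono_tags, lifting) less_le_not_le mem_Collect_eq tanh_real_lt_1 nle_le)
  define s where "s = Sup S"
  have sS: "s \<in> S" unfolding s_def by (rule closed_contains_Sup[OF ne bdd cl])
  have sge: "\<And>x. x \<in> S \<Longrightarrow> x \<le> s" unfolding s_def using bdd by (simp add: cSup_upper)
  have m0s: "m0 \<beta> = s" unfolding m0_def
    apply (rule Greatest_equality) using sS sge unfolding S_def by auto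
  show 1: "m0 \<beta> = tanh (\<beta> * m0 \<beta>)" "0 \<le> m0 \<beta>" using sS m0s unfolding S_def by auto
  show "\<beta> * (1 - (m0 \<beta>)^2) \<le> 1"
  proof (rule ccontr)
    assume "\<not> ?thesis"
    hence gt: "\<beta> * (1 - s^2) - 1 > 0" using m0s by simp
    define g where "g x = tanh (\<beta> * x) - x" for x
    have der: "DERIV g s :> \<beta> * (1 - tanh (\<beta> * s)^2) - 1"
      unfolding g_def by (auto intro!: derivative_eq_intros)
    have ts: "tanh (\<beta> * s) = s" using sS unfolding S_def by auto
    from DERIV_pos_inc_right[OF der] gt ts obtain d where d: "d > 0" "\<forall>h>0. h < d \<longrightarrow> g s < g (s + h)" by auto
    have gs: "g s = 0" using ts g_def by simp
    have pos: "g (s + d/2) > 0" using d gs by auto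
    have le1: "s + d/2 \<le> 1" using pos tanh_real_lt_1[of "\<beta> * (s + d/2)"] unfolding g_def by linarith
    have g1: "g 1 \<le> 0" unfolding g_def using tanh_real_lt_1[of \<beta>] by simp
    have "\<exists>x. s + d/2 \<le> x \<and> x \<le> 1 \<and> g x = 0"
      apply (rule IVT2) using g1 pos le1 unfolding g_def by (auto intro!: continuous_intros)
    then obtain x where x: "s + d/2 \<le> x" "g x = 0" by auto
    have "x \<in> S" using x sS d unfolding S_def g_def by auto
    with sge x d show False by force
  qed
qed

lemma tanh_f_mono: fixes a b :: real assumes "a < b" shows "a - tanh a < b - tanh b"
proof -
  have D: "\<And>x::real. DERIV (\<lambda>x. x - tanh x) x :> 1 - (1 - tanh x ^ 2)"
    by (auto intro!: derivative_eq_intros)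
  have C: "\<And>a b. continuous_on {a..b::real} (\<lambda>x. x - tanh x)" by (auto intro!: continuous_intros)
  have pos: "a - tanh a < b - tanh b" if "0 \<le> a" "a < b" for a b :: real
  proof (rule DERIV_pos_imp_increasing_open[of a b "\<lambda>x. x - tanh x", OF \<open>a < b\<close> _ C])
    fix x assume "a < x" "x < b"
    then have "x \<noteq> 0" using that by auto
    then show "\<exists>y. DERIV (\<lambda>x. x - tanh x) x :> y \<and> y > 0"
      using D[of x] by (intro exI[of _ "1 - (1 - tanh x ^ 2)"]) auto
  qed
  have neg: "a - tanh a < b - tanh b" if "b \<le> 0" "a < b" for a b :: real
  proof (rule DERIV_pos_imp_increasing_open[of a b "\<lambda>x. x - tanh x", OF \<open>a < b\<close> _ C])
    fix x assume "a < x" "x < b"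
    then have "x \<noteq> 0" using that by auto
    then show "\<exists>y. DERIV (\<lambda>x. x - tanh x) x :> y \<and> y > 0"
      using D[of x] by (intro exI[of _ "1 - (1 - tanh x ^ 2)"]) auto
  qed
  show ?thesis
  proof (cases "0 \<le> a")
    case True then show ?thesis using pos assms by blast
  next
    case False
    show ?thesis
    proof (cases "b \<le> 0")
      case True then show ?thesis using neg assms by blast
    next
      case False
      with \<open>\<not> 0 \<le> a\<close> have "a - tanh a < 0 - tanh 0" "0 - tanh 0 < b - tanh b"
        using neg[of 0 a] pos[of 0 b] by auto
      then show ?thesis by linarith
    qed
  qed
qed

lemma tanh_lip: fixes x y :: real assumes "x \<noteq> y" shows "\<bar>tanh x - tanh y\<bar> < \<bar>x - y\<bar>"
proof (cases "x < y")
  case True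
  with tanh_f_mono[OF True] show ?thesis using tanh_real_less_iff[of x y] by auto
next
  case False
  hence "y < x" using assms by auto
  with tanh_f_mono[OF this] show ?thesis using tanh_real_less_iff[of y x] by auto
qed

lemma sum_two: fixes f :: "nat \<Rightarrow> real"
  assumes "finite I" "a \<in> I" "b \<in> I" "a \<noteq> b"
  shows "sum f I = f a + f b + sum f (I - {a, b})"
proof -
  have "sum f I = f a + sum f (I - {a})" using assms by (simp add: sum.remove)
  also have "sum f (I - {a}) = f b + sum f (I - {a} - {b})" using assms by (simp add: sum.remove)
  finally show ?thesis by (simp add: Diff_insert2[symmetric] insert_commute)
qed

lemma weight_prod:
  "spin_weight \<beta> M s = (\<Prod>k<M. exp (\<beta> * m0 \<beta> * s k) / (2 * cosh (\<beta> * m0 \<beta>)))"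
proof -
  have "exp (\<beta> * m0 \<beta> * (\<Sum>\<mu><M. s \<mu>)) = (\<Prod>k<M. exp (\<beta> * m0 \<beta> * s k))"
    by (simp add: sum_distrib_left exp_sum)
  then show ?thesis unfolding spin_weight_def by (simp add: prod_dividef)
qed

lemma tanh_sq: "1 - tanh (x::real) ^ 2 = 1 / cosh x ^ 2"
proof -
  have "cosh x ^ 2 \<noteq> 0" by simp
  then show ?thesis unfolding tanh_def by (simp add: power_divide divide_simps cosh_square_eq)
qed

lemma cosh_exp: "exp (x::real) + exp (-x) = 2 * cosh x"
  by (simp add: cosh_field_def)

lemma sumA:
  fixes \<beta> :: real
  assumes "\<mu> < M" "\<nu> < M" "\<mu> \<noteq> \<nu>"
  defines "F \<equiv> (\<lambda>k. if k = \<mu> then {1} else if k = \<nu> then {-1} else {-1, 1::real})"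
  shows "(\<Sum>s\<in>PiE {..<M} F. spin_weight \<beta> M s) = 1 / (4 * cosh (\<beta> * m0 \<beta>) ^ 2)"
proof -
  define c where "c = \<beta> * m0 \<beta>"
  define e where "e x = exp (c * x) / (2 * cosh c)" for x
  have "(\<Sum>s\<in>PiE {..<M} F. spin_weight \<beta> M s) = (\<Sum>s\<in>PiE {..<M} F. \<Prod>k<M. e (s k))"
    unfolding weight_prod e_def c_def by simp
  also have "\<dots> = (\<Prod>k<M. \<Sum>x\<in>F k. e x)"
    by (rule prod_sum_PiE[symmetric]) (auto simp: F_def)
  also have "\<dots> = (\<Prod>k\<in>{\<mu>,\<nu>}. \<Sum>x\<in>F k. e x)"
  proof (rule prod.mono_neutral_right)
    show "\<forall>i\<in>{..<M} - {\<mu>, \<nu>}. (\<Sum>x\<in>F i. e x) = 1"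
    proof
      fix i assume "i \<in> {..<M} - {\<mu>, \<nu>}"
      then have "F i = {-1, 1}" by (auto simp: F_def)
      then show "(\<Sum>x\<in>F i. e x) = 1" unfolding e_def using cosh_exp[of c] cosh_real_pos[of c]
        by (simp add: add_divide_distrib[symmetric] add.commute)
    qed
  qed (use assms in auto)
  also have "\<dots> = e 1 * e (-1)" using assms by (simp add: F_def)
  also have "\<dots> = 1 / (4 * cosh c ^ 2)" unfolding e_def
    by (simp add: exp_minus field_simps power2_eq_square)
  finally show ?thesis unfolding c_def .
qed

lemma pair_eq:
  fixes \<beta> :: real and M :: nat and p :: "nat \<Rightarrow> real"
  assumes b: "\<beta> > 0" and mu: "\<mu> < M" and nu: "\<nu> < M" and ne: "\<mu> \<noteq> \<nu>"
    and h: "\<forall>\<nu><M. p \<nu> = spin_avg \<beta> M (\<lambda>s. s \<nu> * tanh (\<beta> * dotM M s p))"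
  shows "p \<mu> = p \<nu>"
proof (rule ccontr)
  assume dne: "p \<mu> \<noteq> p \<nu>"
  define d where "d = p \<mu> - p \<nu>"
  have d0: "d \<noteq> 0" using dne d_def by simp
  define W where "W = spin_weight \<beta> M"
  define T where "T s = tanh (\<beta> * dotM M s p)" for s
  define S where "S = spins M"
  define F where "F = (\<lambda>k. if k = \<mu> then {1} else if k = \<nu> then {-1} else {-1, 1::real})"
  define A where "A = PiE {..<M} F"
  define B where "B = {s\<in>S. s \<mu> = -1 \<and> s \<nu> = 1}"
  define \<sigma> where "\<sigma> s = s(\<mu> := s \<nu>, \<nu> := s \<mu>)" for s :: "nat \<Rightarrow> real"
  define g where "g s = W s * ((s \<mu> - s \<nu>) * T s)" for s
  have finS: "finite S" unfolding S_def spins_def by (rule finite_PiE) auto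
  have Sval: "s k = -1 \<or> s k = 1" if "s \<in> S" "k < M" for s k
  proof -
    have "s k \<in> {-1, 1}" using PiE_mem[of s "{..<M}" "\<lambda>_. {-1, 1::real}" k] that
      unfolding S_def spins_def by simp
    then show ?thesis by simp
  qed
  have A_eq: "A = {s\<in>S. s \<mu> = 1 \<and> s \<nu> = -1}"
  proof (intro set_eqI iffI)
    fix s assume s: "s \<in> A"
    have "F k \<subseteq> {-1, 1}" for k unfolding F_def by auto
    then have "s \<in> S" using s PiE_mono[of "{..<M}" F "\<lambda>_. {-1, 1::real}"]
      unfolding A_def S_def spins_def by blast
    moreover have "s \<mu> \<in> F \<mu>" "s \<nu> \<in> F \<nu>" using s mu nu PiE_mem unfolding A_def by blast+
    ultimately show "s \<in> {s \<in> S. s \<mu> = 1 \<and> s \<nu> = -1}" using ne unfolding F_def by simp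
  next
    fix s assume s: "s \<in> {s \<in> S. s \<mu> = 1 \<and> s \<nu> = -1}"
    then have sS: "s \<in> PiE {..<M} (\<lambda>_. {-1, 1::real})" and sv: "s \<mu> = 1" "s \<nu> = -1"
      unfolding S_def spins_def by auto
    have "\<forall>k\<in>{..<M}. s k \<in> F k"
    proof
      fix k assume k: "k \<in> {..<M}"
      have "s k \<in> {-1, 1}" using PiE_mem[OF sS k] .
      then show "s k \<in> F k" using sv unfolding F_def by auto
    qed
    moreover have "s \<in> extensional {..<M}" using sS by (simp add: PiE_iff)
    ultimately show "s \<in> A" unfolding A_def by (simp add: PiE_iff)
  qed
  have finA: "finite A" unfolding A_def F_def by (rule finite_PiE) auto
  have Ane: "A \<noteq> {}" unfolding A_def F_def by (auto simp: PiE_eq_empty_iff)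
  have Wpos: "\<And>s. W s > 0" unfolding W_def spin_weight_def by simp
  have \<sigma>\<sigma>: "\<And>s. \<sigma> (\<sigma> s) = s" unfolding \<sigma>_def using ne by (auto simp: fun_eq_iff)
  have \<sigma>S: "\<sigma> s \<in> S" if s: "s \<in> S" for s
  proof -
    have "\<forall>k\<in>{..<M}. \<sigma> s k \<in> {-1, 1}"
    proof
      fix k assume "k \<in> {..<M}"
      then show "\<sigma> s k \<in> {-1, 1}" using Sval[OF s, of k] Sval[OF s, of \<mu>] Sval[OF s, of \<nu>] mu nu
        unfolding \<sigma>_def by (cases "k = \<nu>"; cases "k = \<mu>") auto
    qed
    moreover have "\<sigma> s \<in> extensional {..<M}"
      unfolding extensional_def
    proof (intro CollectI allI impI)
      fix k assume k: "k \<notin> {..<M}"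
      then have "k \<noteq> \<mu>" "k \<noteq> \<nu>" using mu nu by auto
      moreover have "s k = undefined" using s k unfolding S_def spins_def by (intro extensional_arb[of s]) (auto simp: PiE_def)
      ultimately show "\<sigma> s k = undefined" unfolding \<sigma>_def by simp
    qed
    ultimately show ?thesis unfolding S_def spins_def by (simp add: PiE_iff)
  qed
  have \<sigma>v: "\<sigma> s \<mu> = s \<nu>" "\<sigma> s \<nu> = s \<mu>" for s unfolding \<sigma>_def using ne by auto
  have \<sigma>A: "\<sigma> s \<in> B" if "s \<in> A" for s
    using \<sigma>S[of s] \<sigma>v[of s] that unfolding A_eq B_def by simp
  have \<sigma>B: "\<sigma> s \<in> A" if "s \<in> B" for s
    using \<sigma>S[of s] \<sigma>v[of s] that unfolding A_eq B_def by simp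
  have bij: "bij_betw \<sigma> A B"
    by (rule bij_betw_byWitness[where f' = \<sigma>]) (use \<sigma>\<sigma> \<sigma>A \<sigma>B in auto)
  have rest: "\<And>s k. k \<in> {..<M} - {\<mu>, \<nu>} \<Longrightarrow> \<sigma> s k = s k" unfolding \<sigma>_def by auto
  have restsum: "(\<Sum>k\<in>{..<M} - {\<mu>, \<nu>}. \<sigma> s k * f k) = (\<Sum>k\<in>{..<M} - {\<mu>, \<nu>}. s k * f k)" for s f
    by (rule sum.cong) (simp_all add: rest)
  have fin: "finite {..<M}" "\<mu> \<in> {..<M}" "\<nu> \<in> {..<M}" using mu nu by auto
  have W\<sigma>: "W (\<sigma> s) = W s" if "s \<in> A" for s
  proof -
    have "(\<Sum>k<M. \<sigma> s k) = \<sigma> s \<mu> + \<sigma> s \<nu> + (\<Sum>k\<in>{..<M} - {\<mu>, \<nu>}. \<sigma> s k)"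
      by (rule sum_two[OF fin ne])
    also have "\<dots> = s \<mu> + s \<nu> + (\<Sum>k\<in>{..<M} - {\<mu>, \<nu>}. s k)"
      using restsum[of s "\<lambda>_. 1"] \<sigma>v[of s] by simp
    also have "\<dots> = (\<Sum>k<M. s k)" by (rule sum_two[OF fin ne, symmetric])
    finally show ?thesis unfolding W_def spin_weight_def by simp
  qed
  have dot\<sigma>: "dotM M (\<sigma> s) p = dotM M s p - 2 * d" if "s \<in> A" for s
  proof -
    have sv: "s \<mu> = 1" "s \<nu> = -1" using that A_eq by auto
    have "dotM M (\<sigma> s) p = \<sigma> s \<mu> * p \<mu> + \<sigma> s \<nu> * p \<nu> + (\<Sum>k\<in>{..<M} - {\<mu>, \<nu>}. \<sigma> s k * p k)"
      unfolding dotM_def by (rule sum_two[OF fin ne])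
    also have "\<dots> = - p \<mu> + p \<nu> + (\<Sum>k\<in>{..<M} - {\<mu>, \<nu>}. s k * p k)"
      using restsum[of s p] \<sigma>v[of s] sv by simp
    also have "dotM M s p = s \<mu> * p \<mu> + s \<nu> * p \<nu> + (\<Sum>k\<in>{..<M} - {\<mu>, \<nu>}. s k * p k)"
      unfolding dotM_def by (rule sum_two[OF fin ne])
    ultimately show ?thesis using sv d_def by simp
  qed
  have "d = (\<Sum>s\<in>S. W s * (s \<mu> * T s)) - (\<Sum>s\<in>S. W s * (s \<nu> * T s))"
    using h mu nu unfolding d_def spin_avg_def W_def T_def S_def by simp
  also have "\<dots> = (\<Sum>s\<in>S. g s)" unfolding g_def
    by (simp add: sum_subtractf[symmetric] algebra_simps)
  also have "\<dots> = (\<Sum>s\<in>A \<union> B. g s)"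
  proof (rule sum.mono_neutral_right)
    show "A \<union> B \<subseteq> S" using A_eq B_def by auto
    show "\<forall>i\<in>S - (A \<union> B). g i = 0"
    proof
      fix s assume s: "s \<in> S - (A \<union> B)"
      then have "s \<mu> = s \<nu>" using Sval[of s \<mu>] Sval[of s \<nu>] mu nu unfolding A_eq B_def by auto
      then show "g s = 0" unfolding g_def by simp
    qed
  qed (use finS in auto)
  also have "\<dots> = (\<Sum>s\<in>A. g s) + (\<Sum>s\<in>B. g s)"
    by (rule sum.union_disjoint) (use finA finS in \<open>auto simp: A_eq B_def\<close>)
  also have "(\<Sum>s\<in>B. g s) = (\<Sum>s\<in>A. g (\<sigma> s))" by (rule sum.reindex_bij_betw[OF bij, symmetric])
  also have "(\<Sum>s\<in>A. g s) + (\<Sum>s\<in>A. g (\<sigma> s)) = (\<Sum>s\<in>A. 2 * W s * (T s - T (\<sigma> s)))"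
  proof -
    have "g s + g (\<sigma> s) = 2 * W s * (T s - T (\<sigma> s))" if "s \<in> A" for s
    proof -
      have sv: "s \<mu> = 1" "s \<nu> = -1" using that A_eq by auto
      have "\<sigma> s \<mu> = -1" "\<sigma> s \<nu> = 1" using sv ne unfolding \<sigma>_def by auto
      then show ?thesis using sv W\<sigma>[OF that] unfolding g_def by (simp add: algebra_simps)
    qed
    then show ?thesis by (simp add: sum.distrib[symmetric])
  qed
  finally have dsum: "d = (\<Sum>s\<in>A. 2 * W s * (T s - T (\<sigma> s)))" .
  have Tlip: "\<bar>T s - T (\<sigma> s)\<bar> < 2 * \<beta> * \<bar>d\<bar>" if "s \<in> A" for s
  proof -
    have "\<beta> * dotM M s p \<noteq> \<beta> * dotM M (\<sigma> s) p" using dot\<sigma>[OF that] d0 b by simp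
    from tanh_lip[OF this] show ?thesis unfolding T_def dot\<sigma>[OF that] using b
      by (simp add: algebra_simps abs_mult)
  qed
  have "\<bar>d\<bar> \<le> (\<Sum>s\<in>A. \<bar>2 * W s * (T s - T (\<sigma> s))\<bar>)" unfolding dsum by (rule sum_abs)
  also have "\<dots> < (\<Sum>s\<in>A. 2 * W s * (2 * \<beta> * \<bar>d\<bar>))"
  proof (rule sum_strict_mono[OF finA Ane])
    fix s assume "s \<in> A"
    then show "\<bar>2 * W s * (T s - T (\<sigma> s))\<bar> < 2 * W s * (2 * \<beta> * \<bar>d\<bar>)"
      using Tlip[of s] Wpos[of s] by (simp add: abs_mult)
  qed
  also have "\<dots> = 4 * \<beta> * \<bar>d\<bar> * (\<Sum>s\<in>A. W s)"
    unfolding sum_distrib_left by (rule sum.cong) simp_all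
  also have "(\<Sum>s\<in>A. W s) = 1 / (4 * cosh (\<beta> * m0 \<beta>) ^ 2)"
    unfolding A_def W_def F_def by (rule sumA[OF mu nu ne])
  also have "4 * \<beta> * \<bar>d\<bar> * (1 / (4 * cosh (\<beta> * m0 \<beta>) ^ 2)) = \<bar>d\<bar> * (\<beta> * (1 - (m0 \<beta>)^2))"
    using tanh_sq[of "\<beta> * m0 \<beta>"] m0_props(1)[OF b] by simp
  also have "\<dots> \<le> \<bar>d\<bar> * 1" by (rule mult_left_mono[OF m0_props(3)[OF b]]) simp
  finally show False by simp
qed

theorem mainTheorem3:
  fixes \<beta> :: real and M :: nat and p :: "nat \<Rightarrow> real"
  assumes "\<beta> > 0" and "M \<ge> 1"
    and "\<forall>\<nu><M. p \<nu> = spin_avg \<beta> M (\<lambda>s. s \<nu> * tanh (\<beta> * dotM M s p))"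
  shows "\<forall>\<mu><M. \<forall>\<nu><M. p \<mu> = p \<nu>"
  using pair_eq[OF assms(1) _ _ _ assms(3)] by metis

end
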